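(* Let $n=m^2$ where $m>1$ is odd and squarefree. Then $C_{S(n)^*}=9$.
   Context: For a natural number $n$, $\mathbb Z_n=\mathbb Z/n\mathbb Z$, $S(n)=\{x^2:x\in\mathbb Z_n\}$, $S(n)^*=S(n)\setminus\{0\}$. For $A\subseteq\mathbb Z_n$, a sequence $(y_1,\dots,y_t)$ ($t\ge1$) in $\mathbb Z_n$ is an $A$-weighted zero-sum sequence if there exist $a_1,\dots,a_t\in A$ with $\sum a_iy_i=0$. $C_A(n)$ is the least positive integer $t$ such that every sequence of length $t$ in $\mathbb Z_n$ has a nonempty subsequence of consecutive terms that is an $A$-weighted zero-sum sequence; $C_{S(n)^*}=C_{S(n)^*}(n)$. *)

theory Defs
  imports "HOL-Computational_Algebra.Squarefree"
begin

text \<open>Z_n is modelled by the residues {0..<n} of int, arithmetic taken mod n.\<close>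

definition Zn :: "nat \<Rightarrow> int set" where
  "Zn n = {0..<int n}"

definition Sq :: "nat \<Rightarrow> int set" where
  "Sq n = {(x^2) mod int n | x. x \<in> Zn n}"

definition SqStar :: "nat \<Rightarrow> int set" where
  "SqStar n = Sq n - {0}"

definition weighted_zero_sum :: "nat \<Rightarrow> int set \<Rightarrow> int list \<Rightarrow> bool" where
  "weighted_zero_sum n A ys \<longleftrightarrow> ys \<noteq> [] \<and>
     (\<exists>as. length as = length ys \<and> set as \<subseteq> A \<and>
        (\<Sum>i<length ys. as ! i * ys ! i) mod int n = 0)"

definition has_consec_wzs :: "nat \<Rightarrow> int set \<Rightarrow> int list \<Rightarrow> bool" where
  "has_consec_wzs n A ys \<longleftrightarrow>
     (\<exists>i j. i < j \<and> j \<le> length ys \<and> weighted_zero_sum n A (take (j - i) (drop i ys)))"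

definition C_const :: "int set \<Rightarrow> nat \<Rightarrow> nat" where
  "C_const A n = (LEAST t. t > 0 \<and>
     (\<forall>ys. length ys = t \<and> set ys \<subseteq> Zn n \<longrightarrow> has_consec_wzs n A ys))"

end

theory Submission
  imports Defs "HOL-Number_Theory.Number_Theory"
begin

lemma nonres_mult:
  fixes p a b :: int
  assumes pp: "prime p" "p > 2" and a: "\<not> p dvd a" "\<not> QuadRes p a"
    and b: "\<not> p dvd b" "\<not> QuadRes p b"
  shows "QuadRes p (a*b)"
proof (rule ccontr)
  assume nab: "\<not> QuadRes p (a*b)"
  define P where "P = nat p"
  have Pp: "int P = p" using pp P_def by simp
  have P: "prime P" "2 < P" using pp Pp by (auto simp: prime_nat_int_transfer[symmetric])
  define k where "k = (P - 1) div 2"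
  have ea: "[Legendre a p = a ^ k] (mod p)" using euler_criterion[OF P, of a] Pp k_def by simp
  have eb: "[Legendre b p = b ^ k] (mod p)" using euler_criterion[OF P, of b] Pp k_def by simp
  have eab: "[Legendre (a*b) p = (a*b) ^ k] (mod p)" using euler_criterion[OF P, of "a*b"] Pp k_def by simp
  have nab0: "\<not> p dvd a*b" using a b pp prime_dvd_multD by blast
  have La: "Legendre a p = -1" using a by (simp add: Legendre_def cong_0_iff)
  have Lb: "Legendre b p = -1" using b by (simp add: Legendre_def cong_0_iff)
  have Lab: "Legendre (a*b) p = -1" using nab nab0 by (simp add: Legendre_def cong_0_iff)
  have ak: "[a^k = -1] (mod p)" using ea La by (simp add: cong_sym_eq)
  have bk: "[b^k = -1] (mod p)" using eb Lb by (simp add: cong_sym_eq)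
  have "[a^k * b^k = (-1) * (-1)] (mod p)" using cong_mult[OF ak bk] .
  hence "[(a*b)^k = 1] (mod p)" by (simp add: power_mult_distrib)
  moreover have "[-1 = (a*b)^k] (mod p)" using eab Lab by simp
  ultimately have "[-1 = 1] (mod p)" using cong_trans by blast
  hence "p dvd 2" by (simp add: cong_iff_dvd_diff)
  hence "p \<le> 2" using zdvd_imp_le by simp
  thus False using pp by simp
qed

lemma nonres_exists:
  fixes p :: int
  assumes pp: "prime p" "p > 2"
  shows "\<exists>g. \<not> QuadRes p g"
proof -
  define h where "h = (p - 1) div 2"
  have odd: "odd p" using pp prime_odd_int by blast
  have ph: "p = 2*h + 1" using odd h_def by (auto elim: oddE)
  define S where "S = (\<lambda>x. x^2 mod p) ` {0..h}"
  have "card S \<le> card {0..h}" unfolding S_def by (rule card_image_le) simp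
  also have "card {0..h} = nat (h + 1)" by simp
  finally have cS: "card S < card {0..<p}" using ph pp by simp
  have "\<not> {0..<p} \<subseteq> S"
  proof
    assume "{0..<p} \<subseteq> S"
    hence "card {0..<p} \<le> card S" by (intro card_mono) (auto simp: S_def)
    thus False using cS by simp
  qed
  then obtain r where r0: "r \<in> {0..<p}" "r \<notin> S" by blast
  hence r: "0 \<le> r" "r < p" "r \<notin> S" by auto
  have "\<not> QuadRes p r"
  proof
    assume "QuadRes p r"
    then obtain y where y: "[y^2 = r] (mod p)" unfolding QuadRes_def by blast
    define z where "z = y mod p"
    have z: "0 \<le> z" "z < p" using pp z_def by auto
    have "z^2 mod p = y^2 mod p" using z_def by (simp add: power_mod)
    also have "\<dots> = r" using y r by (simp add: cong_def)
    finally have zr: "z^2 mod p = r" .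
    show False
    proof (cases "z \<le> h")
      case True
      hence "r \<in> S" using zr z unfolding S_def by force
      thus False using r by simp
    next
      case False
      have "(p - z)^2 = z^2 + p * (p - 2*z)" by (simp add: algebra_simps power2_eq_square)
      hence "(p - z)^2 mod p = r" using zr by simp
      moreover have "p - z \<in> {0..h}" using False z ph by simp
      ultimately have "r \<in> S" unfolding S_def by force
      thus False using r by simp
    qed
  qed
  thus ?thesis by blast
qed

lemma inv_mod:
  fixes p a :: int
  assumes "prime p" "\<not> p dvd a"
  shows "\<exists>v. [a * v = 1] (mod p)"
proof -
  have "coprime a p" using prime_imp_coprime[OF assms] by (simp add: coprime_commute)
  thus ?thesis by (rule cong_solve_coprime_int)
qed

lemma not_dvd_sq:
  fixes p s a :: int
  assumes "prime p" "[s^2 = a] (mod p)" "\<not> p dvd a"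
  shows "\<not> p dvd s"
proof
  assume "p dvd s"
  hence "p dvd s^2" by (simp add: power2_eq_square)
  hence "[s^2 = 0] (mod p)" by (simp add: cong_0_iff)
  hence "[a = 0] (mod p)" using assms(2) by (metis cong_sym cong_trans)
  thus False using assms(3) by (simp add: cong_0_iff)
qed

lemma pair_lemma:
  fixes p a b :: int
  assumes pp: "prime p" and "\<not> p dvd a" "\<not> p dvd b" "QuadRes p (-(a*b))"
  shows "\<exists>x y. \<not> p dvd x \<and> \<not> p dvd y \<and> p dvd x^2*a + y^2*b"
proof -
  obtain s where s: "[s^2 = -(a*b)] (mod p)" using assms(4) unfolding QuadRes_def by blast
  have nab: "\<not> p dvd -(a*b)" using assms pp prime_dvd_multD by auto
  have ns: "\<not> p dvd s" using not_dvd_sq[OF pp s nab] .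
  have "p dvd s^2 - (-(a*b))" using s by (simp add: cong_iff_dvd_diff)
  hence "p dvd a * (s^2 - (-(a*b)))" by simp
  moreover have "a * (s^2 - (-(a*b))) = s^2*a + a^2*b" by (simp add: algebra_simps power2_eq_square)
  ultimately have "p dvd s^2*a + a^2*b" by simp
  thus ?thesis using ns assms(2) by blast
qed

lemma quadres_cancel:
  fixes p x b :: int
  assumes pp: "prime p" and "\<not> p dvd b" "QuadRes p (x * b^2)"
  shows "QuadRes p x"
proof -
  obtain t where t: "[t^2 = x*b^2] (mod p)" using assms(3) unfolding QuadRes_def by blast
  obtain v where v: "[b * v = 1] (mod p)" using inv_mod pp assms(2) by blast
  have "p dvd b*v - 1" using v by (simp add: cong_iff_dvd_diff)
  moreover have "(b*v)^2 - 1 = (b*v - 1) * (b*v + 1)" by (simp add: algebra_simps power2_eq_square)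
  ultimately have e: "p dvd (b*v)^2 - 1" by simp
  have d: "p dvd t^2 - x*b^2" using t by (simp add: cong_iff_dvd_diff)
  have "(t*v)^2 - x = (t^2 - x*b^2) * v^2 + x * ((b*v)^2 - 1)"
    by (simp add: algebra_simps power2_eq_square)
  also have "p dvd \<dots>" using d e by simp
  finally have "[(t*v)^2 = x] (mod p)" by (simp add: cong_iff_dvd_diff)
  thus ?thesis unfolding QuadRes_def by blast
qed

lemma quadres_mod: "QuadRes p (g mod p) = QuadRes p g"
  unfolding QuadRes_def by (simp add: cong_def)

lemma small_nonres:
  fixes p :: int
  assumes pp: "prime p" "p > 2"
  shows "\<exists>k A. \<not> QuadRes p k \<and> \<not> p dvd k \<and> [A^2 = k - 1] (mod p) \<and> \<not> p dvd A"
proof -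
  obtain g where g: "\<not> QuadRes p g" using nonres_exists pp by blast
  define g0 where "g0 = g mod p"
  have g0: "\<not> QuadRes p g0" using g quadres_mod g0_def by simp
  have "QuadRes p 0" unfolding QuadRes_def by (rule exI[of _ 0]) simp
  hence "g0 \<noteq> 0" using g0 by auto
  moreover have "0 \<le> g0" "g0 < p" using pp g0_def by auto
  ultimately have g0p: "0 < g0" by simp
  define K where "K = (LEAST k::nat. k > 0 \<and> \<not> QuadRes p (int k))"
  have ex: "nat g0 > 0 \<and> \<not> QuadRes p (int (nat g0))" using g0p g0 by simp
  have K: "K > 0" "\<not> QuadRes p (int K)" using LeastI[of "\<lambda>k. k > 0 \<and> \<not> QuadRes p (int k)", OF ex] K_def by auto
  have "K \<le> nat g0" using Least_le[of "\<lambda>k. k > 0 \<and> \<not> QuadRes p (int k)", OF ex] K_def by simp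
  hence Kp: "int K < p" using \<open>g0 < p\<close> g0p by linarith
  have "QuadRes p 1" unfolding QuadRes_def by (rule exI[of _ 1]) simp
  hence K1: "K \<noteq> 1" using K by auto
  have "\<not> (K - 1 > 0 \<and> \<not> QuadRes p (int (K - 1)))"
    using not_less_Least[of "K - 1" "\<lambda>k. k > 0 \<and> \<not> QuadRes p (int k)"] K K_def by simp
  hence q: "QuadRes p (int K - 1)" using K K1 by (simp add: of_nat_diff)
  then obtain A where A: "[A^2 = int K - 1] (mod p)" unfolding QuadRes_def by blast
  have "\<not> p dvd int K - 1" using K K1 Kp zdvd_imp_le by fastforce
  hence nA: "\<not> p dvd A" using not_dvd_sq[OF pp(1) A] by simp
  have "\<not> p dvd int K" using K Kp zdvd_imp_le by fastforce
  thus ?thesis using K A nA by blast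
qed

lemma core3:
  fixes p a b c :: int
  assumes pp: "prime p" "p > 2" and a: "\<not> p dvd a" and b: "\<not> p dvd b" and c: "\<not> p dvd c"
  shows "(\<exists>x y. \<not> p dvd x \<and> \<not> p dvd y \<and> p dvd x^2*a + y^2*b) \<or>
         (\<exists>x y. \<not> p dvd x \<and> \<not> p dvd y \<and> p dvd x^2*b + y^2*c) \<or>
         (\<exists>x y z. \<not> p dvd x \<and> \<not> p dvd y \<and> \<not> p dvd z \<and> p dvd x^2*a + y^2*b + z^2*c)"
proof (cases "QuadRes p (-(a*b))")
  case True
  thus ?thesis using pair_lemma[OF pp(1) a b] by blast
next
  case nab: False
  show ?thesis
  proof (cases "QuadRes p (-(b*c))")
    case True
    thus ?thesis using pair_lemma[OF pp(1) b c] by blast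
  next
    case nbc: False
    have dab: "\<not> p dvd -(a*b)" using a b pp prime_dvd_multD by auto
    have dbc: "\<not> p dvd -(b*c)" using b c pp prime_dvd_multD by auto
    have dac: "\<not> p dvd a*c" using a c pp prime_dvd_multD by auto
    have q: "QuadRes p ((-(a*b)) * (-(b*c)))" using nonres_mult[OF pp dab nab dbc nbc] .
    have eq: "(-(a*b)) * (-(b*c)) = (a*c) * b^2" by (simp add: algebra_simps power2_eq_square)
    have "QuadRes p ((a*c) * b^2)" using q unfolding eq .
    hence "QuadRes p (a*c)" by (rule quadres_cancel[OF pp(1) b])
    then obtain s where s: "[s^2 = a*c] (mod p)" unfolding QuadRes_def by blast
    have ns: "\<not> p dvd s" using not_dvd_sq[OF pp(1) s dac] .
    obtain K A where KA: "\<not> QuadRes p K" "\<not> p dvd K" "[A^2 = K - 1] (mod p)" "\<not> p dvd A"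
      using small_nonres[OF pp] by blast
    have dKab: "\<not> p dvd K * (-(a*b))" using KA(2) dab pp prime_dvd_multD by blast
    have "QuadRes p (K * (-(a*b)))" using nonres_mult[OF pp KA(2) KA(1) dab nab] .
    then obtain w where w: "[w^2 = K * (-(a*b))] (mod p)" unfolding QuadRes_def by blast
    have nw: "\<not> p dvd w" using not_dvd_sq[OF pp(1) w dKab] .
    have D1: "p dvd s^2 - a*c" using s by (simp add: cong_iff_dvd_diff)
    have D2: "p dvd w^2 + K*a*b" using w by (simp add: cong_iff_dvd_diff mult.assoc)
    have D3: "p dvd A^2 - (K - 1)" using KA(3) by (simp add: cong_iff_dvd_diff)
    define X where "X = A*w*s"
    define Y where "Y = K*s*a"
    define Z where "Z = w*a"
    have "a * (X^2*a + Y^2*b + Z^2*c) = K*s^2*a^2*(w^2 + K*a*b) + w^2*s^2*a^2*(A^2 - (K - 1)) - w^2*a^2*(s^2 - a*c)"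
      unfolding X_def Y_def Z_def by (simp add: algebra_simps power2_eq_square)
    also have "p dvd \<dots>"
    proof -
      have e1: "p dvd K*s^2*a^2*(w^2 + K*a*b)" using D2 by (rule dvd_mult)
      have e2: "p dvd w^2*s^2*a^2*(A^2 - (K - 1))" using D3 by (rule dvd_mult)
      have e3: "p dvd w^2*a^2*(s^2 - a*c)" using D1 by (rule dvd_mult)
      show ?thesis using e1 e2 e3 by (intro dvd_diff dvd_add)
    qed
    finally have "p dvd a * (X^2*a + Y^2*b + Z^2*c)" .
    hence "p dvd X^2*a + Y^2*b + Z^2*c" using a pp prime_dvd_multD by blast
    moreover have "\<not> p dvd X" unfolding X_def using KA(4) nw ns pp prime_dvd_multD by blast
    moreover have "\<not> p dvd Y" unfolding Y_def using KA(2) ns a pp prime_dvd_multD by blast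
    moreover have "\<not> p dvd Z" unfolding Z_def using nw a pp prime_dvd_multD by blast
    ultimately show ?thesis by blast
  qed
qed

lemma lift_ident: "(p::int) * T + ((a + p * (- T * v))^2 - a^2) * b = p * (T * (1 - 2 * a * b * v)) + p^2 * ((- T * v)^2 * b)"
  by (simp add: power2_eq_square algebra_simps)

lemma lift:
  fixes p :: int and B :: "nat set" and x y :: "nat \<Rightarrow> int"
  assumes pp: "prime p" "p > 2" and fin: "finite B" and iB: "i \<in> B"
    and xi: "\<not> p dvd x i" and yi: "\<not> p dvd y i"
    and d: "p dvd (\<Sum>q\<in>B. x q^2 * y q)"
  shows "\<exists>x'. (\<forall>q\<in>B. \<not> p dvd x q \<longrightarrow> \<not> p dvd x' q) \<and> p^2 dvd (\<Sum>q\<in>B. x' q^2 * y q)"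
proof -
  obtain T where T: "(\<Sum>q\<in>B. x q^2 * y q) = p * T" using d by (elim dvdE)
  have n2: "\<not> p dvd 2" using pp zdvd_imp_le[of p 2] by auto
  have "\<not> p dvd 2 * x i * y i" using n2 xi yi pp(1) prime_dvd_multD by blast
  then obtain v where v: "[2 * x i * y i * v = 1] (mod p)" using inv_mod pp(1) by blast
  define t where "t = - T * v"
  define x' where "x' = x(i := x i + p * t)"
  have s1: "(\<Sum>q\<in>B. x q^2 * y q) = x i^2 * y i + (\<Sum>q\<in>B-{i}. x q^2 * y q)"
    using fin iB by (simp add: sum.remove)
  have s2: "(\<Sum>q\<in>B. x' q^2 * y q) = x' i^2 * y i + (\<Sum>q\<in>B-{i}. x' q^2 * y q)"
    using fin iB by (simp add: sum.remove)
  have s3: "(\<Sum>q\<in>B-{i}. x' q^2 * y q) = (\<Sum>q\<in>B-{i}. x q^2 * y q)"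
    unfolding x'_def by (intro sum.cong) auto
  have "(\<Sum>q\<in>B. x' q^2 * y q) = (\<Sum>q\<in>B. x q^2 * y q) + ((x i + p*t)^2 - x i^2) * y i"
    using s1 s2 s3 unfolding x'_def by (simp add: algebra_simps)
  also have "\<dots> = p * (T * (1 - 2 * x i * y i * v)) + p^2 * (t^2 * y i)"
    unfolding T t_def by (rule lift_ident)
  finally have eq: "(\<Sum>q\<in>B. x' q^2 * y q) = p * (T * (1 - 2 * x i * y i * v)) + p^2 * (t^2 * y i)" .
  have "p dvd 1 - 2 * x i * y i * v" using v by (simp add: cong_iff_dvd_diff dvd_diff_commute)
  hence "p * p dvd p * (T * (1 - 2 * x i * y i * v))" by (intro mult_dvd_mono) auto
  hence "p^2 dvd (\<Sum>q\<in>B. x' q^2 * y q)" unfolding eq by (simp add: power2_eq_square)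
  moreover have "\<forall>q\<in>B. \<not> p dvd x q \<longrightarrow> \<not> p dvd x' q"
  proof (intro ballI impI)
    fix q assume "q \<in> B" "\<not> p dvd x q"
    show "\<not> p dvd x' q"
    proof (cases "q = i")
      case True
      show ?thesis
      proof
        assume "p dvd x' q"
        hence "p dvd x i + p * t" using True x'_def by simp
        hence "p dvd (x i + p * t) - p * t" by (rule dvd_diff) simp
        thus False using xi by simp
      qed
    next
      case False
      thus ?thesis using \<open>\<not> p dvd x q\<close> x'_def by simp
    qed
  qed
  ultimately show ?thesis by blast
qed


lemma sq_mem:
  fixes m n :: nat and p r z :: int
  assumes n: "n = m^2" and m: "m > 0" and pp: "prime p" and r: "int m = r * p" and z: "\<not> p dvd z"
  shows "(r * z)^2 mod int n \<in> SqStar n"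
proof -
  have npos: "int n > 0" using n m by simp
  define w where "w = (r*z) mod int n"
  have wZ: "w \<in> Zn n" unfolding Zn_def w_def using npos by simp
  have "w^2 mod int n = (r*z)^2 mod int n" unfolding w_def by (simp add: power_mod)
  hence "\<exists>x. (r * z)^2 mod int n = x^2 mod int n \<and> x \<in> Zn n" using wZ by metis
  hence inSq: "(r * z)^2 mod int n \<in> Sq n" unfolding Sq_def by simp
  have "(r*z)^2 mod int n \<noteq> 0"
  proof
    assume "(r*z)^2 mod int n = 0"
    hence "int n dvd (r*z)^2" by auto
    moreover have "int n = r^2 * p^2" using n r by (simp add: power_mult_distrib)
    moreover have "r \<noteq> 0" using r m by auto
    ultimately have "r^2 * p^2 dvd r^2 * z^2" by (simp add: power_mult_distrib)
    hence "p^2 dvd z^2" using \<open>r \<noteq> 0\<close> by simp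
    hence "p dvd z^2" by (rule dvd_trans[rotated]) (simp add: power2_eq_square)
    hence "p dvd z" using prime_dvd_power_int[OF pp] by blast
    thus False using z by simp
  qed
  thus ?thesis using inSq unfolding SqStar_def by simp
qed

lemma block_lemma:
  fixes m n :: nat and p :: int and ys :: "int list" and x :: "nat \<Rightarrow> int"
  assumes n: "n = m^2" and m: "m > 0" and pp: "prime p" and pm: "p dvd int m"
    and ij: "i < j" "j \<le> length ys"
    and nx: "\<forall>q\<in>{i..<j}. \<not> p dvd x q"
    and d: "p^2 dvd (\<Sum>q\<in>{i..<j}. x q^2 * ys ! q)"
  shows "has_consec_wzs n (SqStar n) ys"
proof -
  obtain r where r: "int m = r * p" using pm by (metis dvd_def mult.commute)
  define blk where "blk = take (j - i) (drop i ys)"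
  define as where "as = map (\<lambda>l. (r * x (i+l))^2 mod int n) [0..<j-i]"
  have lb: "length blk = j - i" using ij unfolding blk_def by simp
  have la: "length as = j - i" unfolding as_def by simp
  have blkn: "\<And>l. l < j - i \<Longrightarrow> blk ! l = ys ! (i + l)" using ij unfolding blk_def by simp
  have asn: "\<And>l. l < j - i \<Longrightarrow> as ! l = (r * x (i+l))^2 mod int n" unfolding as_def by simp
  have setas: "set as \<subseteq> SqStar n"
  proof
    fix a assume "a \<in> set as"
    then obtain l where l: "l < j - i" "a = (r * x (i+l))^2 mod int n" unfolding as_def by auto
    have "\<not> p dvd x (i+l)" using nx l(1) by simp
    thus "a \<in> SqStar n" using sq_mem[OF n m pp r] l(2) by simp
  qed
  have "(\<Sum>l<length blk. as ! l * blk ! l) = (\<Sum>l<j-i. ((r * x (i+l))^2 mod int n) * ys ! (i+l))"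
    using lb asn blkn by (intro sum.cong) auto
  hence "(\<Sum>l<length blk. as ! l * blk ! l) mod int n = (\<Sum>l<j-i. ((r * x (i+l))^2 mod int n) * ys ! (i+l)) mod int n"
    by simp
  also have "\<dots> = (\<Sum>l<j-i. ((r * x (i+l))^2 mod int n) * ys ! (i+l) mod int n) mod int n"
    by (simp add: mod_sum_eq)
  also have "\<dots> = (\<Sum>l<j-i. (r * x (i+l))^2 * ys ! (i+l) mod int n) mod int n"
    by (simp add: mod_mult_left_eq)
  also have "\<dots> = (\<Sum>l<j-i. (r * x (i+l))^2 * ys ! (i+l)) mod int n"
    by (simp add: mod_sum_eq)
  also have "(\<Sum>l<j-i. (r * x (i+l))^2 * ys ! (i+l)) = r^2 * (\<Sum>l<j-i. x (i+l)^2 * ys ! (i+l))"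
    by (simp add: sum_distrib_left power_mult_distrib mult.assoc)
  also have "(\<Sum>l<j-i. x (i+l)^2 * ys ! (i+l)) = (\<Sum>q\<in>{i..<j}. x q^2 * ys ! q)"
    using sum.atLeastLessThan_shift_0[of "\<lambda>q. x q^2 * ys ! q" i j] by (simp add: lessThan_atLeast0 comp_def)
  finally have eqs: "(\<Sum>l<length blk. as ! l * blk ! l) mod int n = (r^2 * (\<Sum>q\<in>{i..<j}. x q^2 * ys ! q)) mod int n" .
  have "int n = r^2 * p^2" using n r by (simp add: power_mult_distrib)
  hence "int n dvd r^2 * (\<Sum>q\<in>{i..<j}. x q^2 * ys ! q)" using d by (simp add: mult_dvd_mono)
  hence "(\<Sum>l<length blk. as ! l * blk ! l) mod int n = 0" using eqs by simp
  hence "weighted_zero_sum n (SqStar n) blk"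
    unfolding weighted_zero_sum_def using lb la setas ij by auto
  thus ?thesis unfolding has_consec_wzs_def blk_def using ij by blast
qed

lemma unit_block:
  fixes m n :: nat and p :: int and ys :: "int list" and X :: "nat \<Rightarrow> int"
  assumes n: "n = m^2" and m: "m > 0" and pp: "prime p" "p > 2" and pm: "p dvd int m"
    and ie: "i < e" "e \<le> length ys"
    and Sp: "Sp \<subseteq> {i..<e}" and i0: "i0 \<in> Sp" "\<not> p dvd ys ! i0"
    and others: "\<forall>q\<in>{i..<e} - Sp. p dvd ys ! q"
    and nX: "\<forall>q\<in>Sp. \<not> p dvd X q"
    and d: "p dvd (\<Sum>q\<in>Sp. X q^2 * ys ! q)"
  shows "has_consec_wzs n (SqStar n) ys"
proof -
  define x where "x q = (if q \<in> Sp then X q else 1)" for q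
  have fin: "finite {i..<e}" by simp
  have "(\<Sum>q\<in>{i..<e}. x q^2 * ys ! q) = (\<Sum>q\<in>Sp. x q^2 * ys ! q) + (\<Sum>q\<in>{i..<e} - Sp. x q^2 * ys ! q)"
    using sum.subset_diff[OF Sp fin] by (simp add: add.commute)
  also have "(\<Sum>q\<in>Sp. x q^2 * ys ! q) = (\<Sum>q\<in>Sp. X q^2 * ys ! q)"
    unfolding x_def by (intro sum.cong) auto
  finally have eq: "(\<Sum>q\<in>{i..<e}. x q^2 * ys ! q) = (\<Sum>q\<in>Sp. X q^2 * ys ! q) + (\<Sum>q\<in>{i..<e} - Sp. x q^2 * ys ! q)" .
  have "p dvd (\<Sum>q\<in>{i..<e} - Sp. x q^2 * ys ! q)"
    using others by (intro dvd_sum) (simp add: x_def)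
  hence dd: "p dvd (\<Sum>q\<in>{i..<e}. x q^2 * ys ! q)" unfolding eq using d by simp
  have i0B: "i0 \<in> {i..<e}" using i0 Sp by blast
  have xi0: "\<not> p dvd x i0" using nX i0 x_def by simp
  obtain x' where x': "\<forall>q\<in>{i..<e}. \<not> p dvd x q \<longrightarrow> \<not> p dvd x' q"
      "p^2 dvd (\<Sum>q\<in>{i..<e}. x' q^2 * ys ! q)"
    using lift[OF pp fin i0B xi0 i0(2) dd] by blast
  have "\<forall>q\<in>{i..<e}. \<not> p dvd x q"
  proof
    fix q assume "q \<in> {i..<e}"
    show "\<not> p dvd x q"
    proof (cases "q \<in> Sp")
      case True thus ?thesis using nX x_def by simp
    next
      case False thus ?thesis using pp x_def by (simp add: prime_int_iff)
    qed
  qed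
  hence "\<forall>q\<in>{i..<e}. \<not> p dvd x' q" using x'(1) by blast
  thus ?thesis using block_lemma[OF n m pp(1) pm ie _ x'(2)] by blast
qed

lemma ptype_block:
  fixes m n :: nat and p :: int and ys :: "int list" and x z :: "nat \<Rightarrow> int"
  assumes n: "n = m^2" and m: "m > 0" and pp: "prime p" and pm: "p dvd int m"
    and ie: "i < e" "e \<le> length ys"
    and yz: "\<forall>q\<in>{i..<e}. ys ! q = p * z q"
    and nx: "\<forall>q\<in>{i..<e}. \<not> p dvd x q"
    and d: "p dvd (\<Sum>q\<in>{i..<e}. x q^2 * z q)"
  shows "has_consec_wzs n (SqStar n) ys"
proof -
  have "(\<Sum>q\<in>{i..<e}. x q^2 * ys ! q) = p * (\<Sum>q\<in>{i..<e}. x q^2 * z q)"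
    using yz by (simp add: sum_distrib_left algebra_simps)
  moreover have "p * p dvd p * (\<Sum>q\<in>{i..<e}. x q^2 * z q)" using d by simp
  ultimately have "p^2 dvd (\<Sum>q\<in>{i..<e}. x q^2 * ys ! q)" by (simp add: power2_eq_square)
  thus ?thesis using block_lemma[OF n m pp pm ie nx] by blast
qed



lemma upper:
  fixes m n :: nat and ys :: "int list"
  assumes n: "n = m^2" and m1: "m > 1" and odd: "odd m" and len: "length ys = 9"
  shows "has_consec_wzs n (SqStar n) ys"
proof -
  obtain P where P: "prime P" "P dvd m" using prime_factor_nat[of m] m1 by auto
  define p where "p = int P"
  have pp1: "prime p" using P p_def by (simp add: prime_nat_int_transfer)
  have pm: "p dvd int m" using P p_def by simp
  have "odd P" using P(2) odd dvd_trans by blast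
  moreover have "P \<ge> 2" using P(1) prime_ge_2_nat by blast
  ultimately have "P > 2" by (cases "P = 2") auto
  hence pp2: "p > 2" using p_def by simp
  note pp = pp1 pp2
  have m0: "m > 0" using m1 by simp
  show ?thesis
  proof (cases "\<exists>q<9. p^2 dvd ys ! q")
    case True
    then obtain q where q: "q < 9" "p^2 dvd ys ! q" by blast
    have "p^2 dvd (\<Sum>q'\<in>{q..<Suc q}. (\<lambda>_. 1::int) q'^2 * ys ! q')" using q by simp
    moreover have "\<forall>q'\<in>{q..<Suc q}. \<not> p dvd (\<lambda>_. 1::int) q'" using pp by (simp add: prime_int_iff)
    moreover have "q < Suc q" "Suc q \<le> length ys" using q len by auto
    ultimately show ?thesis using block_lemma[OF n m0 pp1 pm, where x="\<lambda>_. 1"] by blast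
  next
    case notA: False
    define U where "U = {q. q < 9 \<and> \<not> p dvd ys ! q}"
    have finU: "finite U" unfolding U_def by simp
    have nonU: "\<And>q. q < 9 \<Longrightarrow> q \<notin> U \<Longrightarrow> p dvd ys ! q" unfolding U_def by simp
    have inU: "\<And>q. q \<in> U \<Longrightarrow> q < 9 \<and> \<not> p dvd ys ! q" unfolding U_def by simp
    show ?thesis
    proof (cases "card U \<ge> 3")
      case True
      define i where "i = Min U"
      define U1 where "U1 = U - {i}"
      define j where "j = Min U1"
      define U2 where "U2 = U1 - {j}"
      define k where "k = Min U2"
      have "U \<noteq> {}" using True by auto
      hence iU: "i \<in> U" and imin: "\<And>q. q \<in> U \<Longrightarrow> i \<le> q" using finU i_def by auto
      have fin1: "finite U1" using finU U1_def by simp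
      have "card U1 = card U - 1" using iU finU U1_def by simp
      hence "U1 \<noteq> {}" using True by auto
      hence jU: "j \<in> U1" and jmin: "\<And>q. q \<in> U1 \<Longrightarrow> j \<le> q" using fin1 j_def by auto
      have fin2: "finite U2" using fin1 U2_def by simp
      have "card U2 = card U1 - 1" using jU fin1 U2_def by simp
      hence "U2 \<noteq> {}" using True \<open>card U1 = card U - 1\<close> by auto
      hence kU: "k \<in> U2" and kmin: "\<And>q. q \<in> U2 \<Longrightarrow> k \<le> q" using fin2 k_def by auto
      have ij: "i < j" using jU imin U1_def by (metis DiffE insertI1 le_neq_implies_less)
      have jk: "j < k" using kU jmin U2_def by (metis DiffE insertI1 le_neq_implies_less)
      have ui: "\<not> p dvd ys ! i" using inU iU by blast
      have uj: "\<not> p dvd ys ! j" using inU jU U1_def by blast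
      have uk: "\<not> p dvd ys ! k" and k9: "k < 9" using inU kU U2_def U1_def by blast+
      have gap1: "\<And>q. i < q \<Longrightarrow> q < j \<Longrightarrow> p dvd ys ! q"
      proof -
        fix q assume "i < q" "q < j"
        hence "q \<notin> U" using jmin U1_def by force
        thus "p dvd ys ! q" using nonU \<open>q < j\<close> jk k9 by simp
      qed
      have gap2: "\<And>q. j < q \<Longrightarrow> q < k \<Longrightarrow> p dvd ys ! q"
      proof -
        fix q assume "j < q" "q < k"
        hence "q \<notin> U" using kmin U2_def U1_def ij by force
        thus "p dvd ys ! q" using nonU \<open>q < k\<close> k9 by simp
      qed
      consider (c1) x1 x2 where "\<not> p dvd x1" "\<not> p dvd x2" "p dvd x1^2 * ys!i + x2^2 * ys!j"
        | (c2) x1 x2 where "\<not> p dvd x1" "\<not> p dvd x2" "p dvd x1^2 * ys!j + x2^2 * ys!k"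
        | (c3) x1 x2 x3 where "\<not> p dvd x1" "\<not> p dvd x2" "\<not> p dvd x3" "p dvd x1^2 * ys!i + x2^2 * ys!j + x3^2 * ys!k"
        using core3[OF pp ui uj uk] by blast
      thus ?thesis
      proof cases
        case c1
        define X where "X q = (if q = i then x1 else x2)" for q
        have "(\<Sum>q\<in>{i,j}. X q^2 * ys ! q) = x1^2 * ys!i + x2^2 * ys!j" using ij X_def by simp
        hence d: "p dvd (\<Sum>q\<in>{i,j}. X q^2 * ys ! q)" using c1 by simp
        show ?thesis
        proof (rule unit_block[OF n m0 pp pm _ _ _ _ ui _ _ d])
          show "i < Suc j" "Suc j \<le> length ys" using ij jk k9 len by auto
          show "{i, j} \<subseteq> {i..<Suc j}" using ij by auto
          show "i \<in> {i,j}" by simp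
          show "\<forall>q\<in>{i..<Suc j} - {i, j}. p dvd ys ! q" using gap1 by auto
          show "\<forall>q\<in>{i, j}. \<not> p dvd X q" using c1 X_def by auto
        qed
      next
        case c2
        define X where "X q = (if q = j then x1 else x2)" for q
        have "(\<Sum>q\<in>{j,k}. X q^2 * ys ! q) = x1^2 * ys!j + x2^2 * ys!k" using jk X_def by simp
        hence d: "p dvd (\<Sum>q\<in>{j,k}. X q^2 * ys ! q)" using c2 by simp
        show ?thesis
        proof (rule unit_block[OF n m0 pp pm _ _ _ _ uj _ _ d])
          show "j < Suc k" "Suc k \<le> length ys" using jk k9 len by auto
          show "{j, k} \<subseteq> {j..<Suc k}" using jk by auto
          show "j \<in> {j,k}" by simp
          show "\<forall>q\<in>{j..<Suc k} - {j, k}. p dvd ys ! q" using gap2 by auto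
          show "\<forall>q\<in>{j, k}. \<not> p dvd X q" using c2 X_def by auto
        qed
      next
        case c3
        define X where "X q = (if q = i then x1 else if q = j then x2 else x3)" for q
        have "(\<Sum>q\<in>{i,j,k}. X q^2 * ys ! q) = x1^2 * ys!i + x2^2 * ys!j + x3^2 * ys!k"
          using ij jk X_def by simp
        hence d: "p dvd (\<Sum>q\<in>{i,j,k}. X q^2 * ys ! q)" using c3 by simp
        show ?thesis
        proof (rule unit_block[OF n m0 pp pm _ _ _ _ ui _ _ d])
          show "i < Suc k" "Suc k \<le> length ys" using ij jk k9 len by auto
          show "{i, j, k} \<subseteq> {i..<Suc k}" using ij jk by auto
          show "i \<in> {i,j,k}" by simp
          show "\<forall>q\<in>{i..<Suc k} - {i, j, k}. p dvd ys ! q"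
          proof
            fix q assume "q \<in> {i..<Suc k} - {i, j, k}"
            hence "i < q" "q < k" "q \<noteq> j" by auto
            thus "p dvd ys ! q" using gap1 gap2 by (cases "q < j") auto
          qed
          show "\<forall>q\<in>{i, j, k}. \<not> p dvd X q" using c3 X_def by auto
        qed
      qed
    next
      case False
      have "\<exists>t\<in>{0,3,6::nat}. t \<notin> U \<and> t+1 \<notin> U \<and> t+2 \<notin> U"
      proof (rule ccontr)
        assume "\<not> ?thesis"
        then obtain u0 u1 u2 where u: "u0 \<in> U" "u0 < 3" "u1 \<in> U" "3 \<le> u1" "u1 < 6" "u2 \<in> U" "6 \<le> u2"
          by (auto simp: numeral_eq_Suc)
        hence "card {u0,u1,u2} = 3" by auto
        moreover have "card {u0,u1,u2} \<le> card U" using u finU by (intro card_mono) auto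
        ultimately show False using False by simp
      qed
      then obtain t where t: "t \<in> {0,3,6::nat}" "t \<notin> U" "t+1 \<notin> U" "t+2 \<notin> U" by blast
      have t9: "t + 2 < 9" using t(1) by auto
      define z where "z q = ys ! q div p" for q
      have zprop: "ys ! q = p * z q \<and> \<not> p dvd z q" if "q \<in> {t, t+1, t+2}" for q
      proof -
        have q9: "q < 9" using that t9 by auto
        have qU: "q \<notin> U" using that t by auto
        have "p dvd ys ! q" using nonU[OF q9 qU] .
        hence eq: "ys ! q = p * z q" unfolding z_def by simp
        moreover have "\<not> p dvd z q"
        proof
          assume "p dvd z q"
          hence "p^2 dvd ys ! q" using eq by (simp add: power2_eq_square)
          thus False using notA q9 by blast
        qed
        ultimately show ?thesis by blast
      qed
      have z0: "\<not> p dvd z t" "\<not> p dvd z (t+1)" "\<not> p dvd z (t+2)" using zprop by auto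
      have yz: "\<And>i e. t \<le> i \<Longrightarrow> e \<le> t + 3 \<Longrightarrow> \<forall>q\<in>{i..<e}. ys ! q = p * z q"
      proof
        fix i e q assume "t \<le> i" "e \<le> t + 3" "q \<in> {i..<e}"
        hence "q \<in> {t, t+1, t+2}" by auto
        thus "ys ! q = p * z q" using zprop by blast
      qed
      have len3: "t + 3 \<le> length ys" using t9 len by simp
      consider (c1) x1 x2 where "\<not> p dvd x1" "\<not> p dvd x2" "p dvd x1^2 * z t + x2^2 * z (t+1)"
        | (c2) x1 x2 where "\<not> p dvd x1" "\<not> p dvd x2" "p dvd x1^2 * z (t+1) + x2^2 * z (t+2)"
        | (c3) x1 x2 x3 where "\<not> p dvd x1" "\<not> p dvd x2" "\<not> p dvd x3" "p dvd x1^2 * z t + x2^2 * z (t+1) + x3^2 * z (t+2)"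
        using core3[OF pp z0] by blast
      thus ?thesis
      proof cases
        case c1
        define X where "X q = (if q = t then x1 else x2)" for q
        have I: "{t..<t+2} = {t, t+1}" by auto
        have "(\<Sum>q\<in>{t..<t+2}. X q^2 * z q) = x1^2 * z t + x2^2 * z (t+1)" unfolding I X_def by simp
        hence d: "p dvd (\<Sum>q\<in>{t..<t+2}. X q^2 * z q)" using c1 by simp
        have Y: "\<forall>q\<in>{t..<t+2}. ys ! q = p * z q" using yz[of t "t+2"] by simp
        show ?thesis
          using ptype_block[OF n m0 pp1 pm _ _ Y _ d] len3 c1 X_def I by auto
      next
        case c2
        define X where "X q = (if q = t+1 then x1 else x2)" for q
        have I: "{t+1..<t+3} = {t+1, t+2}" by auto
        have "(\<Sum>q\<in>{t+1..<t+3}. X q^2 * z q) = x1^2 * z (t+1) + x2^2 * z (t+2)" unfolding I X_def by simp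
        hence d: "p dvd (\<Sum>q\<in>{t+1..<t+3}. X q^2 * z q)" using c2 by simp
        have Y: "\<forall>q\<in>{t+1..<t+3}. ys ! q = p * z q" using yz[of "t+1" "t+3"] by simp
        show ?thesis
          using ptype_block[OF n m0 pp1 pm _ _ Y _ d] len3 c2 X_def I by auto
      next
        case c3
        define X where "X q = (if q = t then x1 else if q = t+1 then x2 else x3)" for q
        have I: "{t..<t+3} = {t, t+1, t+2}" by auto
        have "(\<Sum>q\<in>{t..<t+3}. X q^2 * z q) = x1^2 * z t + x2^2 * z (t+1) + x3^2 * z (t+2)" unfolding I X_def by simp
        hence d: "p dvd (\<Sum>q\<in>{t..<t+3}. X q^2 * z q)" using c3 by simp
        have Y: "\<forall>q\<in>{t..<t+3}. ys ! q = p * z q" using yz[of t "t+3"] by simp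
        show ?thesis
          using ptype_block[OF n m0 pp1 pm _ _ Y _ d] len3 c3 X_def I by auto
      qed
    qed
  qed
qed

lemma sqf_int_prime:
  fixes m :: nat and p :: int
  assumes "squarefree m" "prime p"
  shows "\<not> p * p dvd int m"
proof
  assume h: "p * p dvd int m"
  have pp: "p > 1" using assms(2) prime_gt_1_int by blast
  have "int (nat p ^ 2) = p * p" using pp by (simp add: power2_eq_square)
  hence "nat p ^ 2 dvd m" using h by (metis of_nat_dvd_iff)
  hence "nat p dvd 1" using assms(1) squarefreeD by blast
  thus False using pp by simp
qed
lemma prime_witness:
  fixes m :: nat and x :: int
  assumes "squarefree m" "m > 0" "\<not> int m dvd x"
  shows "\<exists>p::int. prime p \<and> p dvd int m \<and> \<not> p dvd x"
proof -
  define g where "g = gcd (int m) x"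
  define m' where "m' = int m div g"
  define x' where "x' = x div g"
  have gpos: "g > 0" using assms(2) g_def by simp
  have mg: "int m = g * m'" using g_def m'_def by simp
  have xg: "x = g * x'" using g_def x'_def by simp
  have cop: "coprime m' x'" using div_gcd_coprime[of "int m" x] assms(2) g_def m'_def x'_def by simp
  have "m' \<noteq> 1"
  proof
    assume "m' = 1" hence "int m = g" using mg by simp
    hence "int m dvd x" using xg by simp
    thus False using assms(3) by simp
  qed
  moreover have "m' > 0"
  proof -
    have "0 < g * m'" using mg assms(2) by simp
    thus ?thesis using gpos by (simp add: zero_less_mult_iff)
  qed
  ultimately have "\<not> is_unit m'" by simp
  then obtain p where p: "prime p" "p dvd m'" using prime_divisor_exists[of m'] \<open>m' > 0\<close> by auto
  have pm: "p dvd int m" using p mg by simp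
  have "\<not> p dvd x"
  proof
    assume "p dvd x"
    hence "p dvd g \<or> p dvd x'" using xg p(1) by (metis prime_dvd_mult_iff)
    thus False
    proof
      assume "p dvd g"
      hence "p * p dvd int m" using mg p(2) by (simp add: mult_dvd_mono)
      thus False using sqf_int_prime assms(1) p(1) by blast
    next
      assume "p dvd x'"
      hence "is_unit p" using cop p(2) coprime_common_divisor by blast
      thus False using p(1) not_prime_unit by blast
    qed
  qed
  thus ?thesis using p pm by blast
qed
lemma no_zero:
  fixes m :: nat and x u :: int
  assumes "squarefree m" "m > 0" "\<not> int m dvd x"
    "\<And>p. prime p \<Longrightarrow> p dvd int m \<Longrightarrow> \<not> p dvd u"
  shows "\<not> int m dvd x^2 * u"
proof
  assume h: "int m dvd x^2 * u"
  obtain p where p: "prime p" "p dvd int m" "\<not> p dvd x" using prime_witness assms by blast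
  have "p dvd x^2 * u" using h p(2) dvd_trans by blast
  hence "p dvd x^2 \<or> p dvd u" using p(1) prime_dvd_multD by blast
  thus False using p assms(4)[OF p(1) p(2)] prime_dvd_power_int[OF p(1)] by blast
qed



lemma no_pair:
  fixes m :: nat and x y c :: int
  assumes "squarefree m" "m > 0" "\<not> int m dvd x"
    "\<And>p. prime p \<Longrightarrow> p dvd int m \<Longrightarrow> \<not> QuadRes p (-c)"
  shows "\<not> int m dvd x^2 + y^2 * c"
proof
  assume h: "int m dvd x^2 + y^2 * c"
  obtain p where p: "prime p" "p dvd int m" "\<not> p dvd x" using prime_witness assms by blast
  have d: "p dvd x^2 + y^2 * c" using h p(2) dvd_trans by blast
  show False
  proof (cases "p dvd y")
    case True
    hence "p dvd y^2 * c" by (simp add: power2_eq_square)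
    hence "p dvd (x^2 + y^2*c) - y^2*c" using d by (rule dvd_diff[rotated])
    hence "p dvd x^2" by simp
    thus False using p prime_dvd_power_int[OF p(1)] by blast
  next
    case False
    obtain v where v: "[y * v = 1] (mod p)" using inv_mod p(1) False by blast
    have "p dvd y*v - 1" using v by (simp add: cong_iff_dvd_diff)
    moreover have "(y*v)^2 - 1 = (y*v - 1) * (y*v + 1)" by (simp add: algebra_simps power2_eq_square)
    ultimately have e: "p dvd (y*v)^2 - 1" by simp
    have "(x*v)^2 - (-c) = (x^2 + y^2*c) * v^2 - c * ((y*v)^2 - 1)"
      by (simp add: algebra_simps power2_eq_square)
    also have "p dvd \<dots>" using d e by simp
    finally have "[(x*v)^2 = -c] (mod p)" by (simp add: cong_iff_dvd_diff)
    hence "QuadRes p (-c)" unfolding QuadRes_def by blast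
    thus False using assms(4) p by blast
  qed
qed



lemma sqstar_prop:
  fixes m n :: nat and a :: int
  assumes n: "n = m^2" and a: "a \<in> SqStar n"
  shows "\<exists>x. int m dvd a - x^2 \<and> \<not> int m dvd x"
proof -
  obtain x where x: "a = x^2 mod int n" "a \<noteq> 0" using a unfolding SqStar_def Sq_def by blast
  have "int n dvd x^2 - a" using x(1) by (simp add: minus_mod_eq_mult_div)
  hence d: "int n dvd a - x^2" by (simp add: dvd_diff_commute)
  have "int m dvd int n" using n by simp
  hence "int m dvd a - x^2" using d dvd_trans by blast
  moreover have "\<not> int m dvd x"
  proof
    assume "int m dvd x"
    hence "int m ^ 2 dvd x^2" by (simp add: power2_eq_square mult_dvd_mono)
    hence "int n dvd x^2" using n by simp
    hence "a = 0" using x(1) by simp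
    thus False using x(2) by simp
  qed
  ultimately show ?thesis by blast
qed


lemma exists_c:
  fixes m :: nat
  assumes m1: "m > 1" and odd: "odd m"
  shows "\<exists>c::int. 0 < c \<and> c < int m \<and> (\<forall>p. prime p \<longrightarrow> p dvd int m \<longrightarrow> \<not> p dvd c \<and> \<not> QuadRes p (-c))"
proof -
  define A where "A = prime_factors m"
  have finA: "finite A" unfolding A_def by simp
  have Aprop: "prime P \<and> P dvd m \<and> P > 2" if "P \<in> A" for P
  proof -
    have P: "prime P" "P dvd m" using that m1 unfolding A_def by auto
    have "odd P" using P(2) odd dvd_trans by blast
    moreover have "P \<ge> 2" using P(1) prime_ge_2_nat by blast
    ultimately have "P > 2" by (cases "P = 2") auto
    thus ?thesis using P by blast
  qed
  have "\<forall>P\<in>A. \<exists>g. \<not> QuadRes (int P) g"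
  proof
    fix P assume "P \<in> A"
    hence "prime (int P)" "int P > 2" using Aprop by (auto simp: prime_nat_int_transfer)
    thus "\<exists>g. \<not> QuadRes (int P) g" using nonres_exists by blast
  qed
  from bchoice[OF this] obtain g where g: "\<forall>P\<in>A. \<not> QuadRes (int P) (g P)" by blast
  define u where "u P = nat ((- g P) mod int P)" for P
  have cop: "\<forall>i\<in>A. \<forall>j\<in>A. i \<noteq> j \<longrightarrow> coprime i j"
    using Aprop by (auto intro: primes_coprime)
  obtain x where x: "\<forall>P\<in>A. [x = u P] (mod P)"
    using chinese_remainder_nat[OF finA, of id u] cop by auto
  define c where "c = int (x mod m)"
  have key: "\<not> p dvd c \<and> \<not> QuadRes p (-c)" if p: "prime p" "p dvd int m" for p
  proof -
    define P where "P = nat p"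
    have pP: "int P = p" using p P_def prime_ge_0_int by simp
    have "prime P" using p pP by (simp add: prime_nat_int_transfer[symmetric])
    moreover have "P dvd m" using p(2) pP[symmetric] by (simp add: of_nat_dvd_iff)
    ultimately have PA: "P \<in> A" unfolding A_def using m1 by (simp add: in_prime_factors_iff)
    have "[x mod m = x] (mod P)" using Aprop[OF PA] by (simp add: cong_def mod_mod_cancel)
    hence "[x mod m = u P] (mod P)" using x PA cong_trans by blast
    hence "[int (x mod m) = int (u P)] (mod int P)" by (simp add: cong_int_iff)
    moreover have "int (u P) = (- g P) mod int P" unfolding u_def using pP p prime_gt_0_int by simp
    ultimately have "[c = - g P] (mod p)" unfolding c_def using pP by (simp add: cong_def)
    hence "p dvd c - (- g P)" by (simp add: cong_iff_dvd_diff)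
    hence "p dvd c + g P" by simp
    hence "p dvd -(c + g P)" by (simp only: dvd_minus_iff)
    moreover have "-(c + g P) = (-c) - g P" by simp
    ultimately have "p dvd (-c) - g P" by simp
    hence "(- c) mod p = g P mod p" by (simp add: mod_eq_dvd_iff)
    hence "QuadRes p (-c) = QuadRes p (g P)" using quadres_mod[of p "-c"] quadres_mod[of p "g P"] by simp
    moreover have "\<not> QuadRes (int P) (g P)" using g PA by blast
    ultimately have nq: "\<not> QuadRes p (-c)" using pP by simp
    have "\<not> p dvd c"
    proof
      assume "p dvd c"
      hence "[-c = 0] (mod p)" by (simp add: cong_0_iff)
      hence "[(0::int)^2 = -c] (mod p)" by (simp add: cong_sym_eq)
      thus False using nq unfolding QuadRes_def by blast
    qed
    thus ?thesis using nq by blast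
  qed
  obtain P where P: "prime P" "P dvd m" using prime_factor_nat[of m] m1 by auto
  have "prime (int P)" "int P dvd int m" using P by (auto simp: prime_nat_int_transfer)
  hence "\<not> int P dvd c" using key by blast
  hence "c \<noteq> 0" by auto
  moreover have "c \<ge> 0" "c < int m" unfolding c_def using m1 by auto
  ultimately show ?thesis using key by (intro exI[of _ c]) auto
qed


lemma bad_nth:
  fixes mm c :: int
  assumes q: "q < 8"
  shows "[mm, mm*c, 1, mm, mm*c, c, mm, mm*c] ! q =
    (if q = 2 then 1 else if q = 5 then c else if q mod 3 = 0 then mm else mm*c)"
proof -
  have "q = 0 \<or> q = 1 \<or> q = 2 \<or> q = 3 \<or> q = 4 \<or> q = 5 \<or> q = 6 \<or> q = 7" using q by arith
  thus ?thesis by (elim disjE) simp_all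
qed

lemma lower:
  fixes m n :: nat and c :: int
  assumes n: "n = m^2" and m1: "m > 1" and sqf: "squarefree m"
    and cp: "\<forall>p. prime p \<longrightarrow> p dvd int m \<longrightarrow> \<not> p dvd c \<and> \<not> QuadRes p (-c)"
  shows "\<not> has_consec_wzs n (SqStar n) [int m, int m*c, 1, int m, int m*c, c, int m, int m*c]"
    (is "\<not> has_consec_wzs n (SqStar n) ?bad")
proof
  define mm where "mm = int m"
  have m0: "m > 0" using m1 by simp
  have mm0: "mm \<noteq> 0" using m0 mm_def by simp
  have cu: "\<And>p. prime p \<Longrightarrow> p dvd int m \<Longrightarrow> \<not> p dvd c" using cp by blast
  have cq: "\<And>p. prime p \<Longrightarrow> p dvd int m \<Longrightarrow> \<not> QuadRes p (-c)" using cp by blast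
  have u1: "\<And>p. prime p \<Longrightarrow> p dvd int m \<Longrightarrow> \<not> p dvd (1::int)" by (simp add: prime_int_iff)
  define bad where "bad = ?bad"
  have lbad: "length bad = 8" unfolding bad_def by simp
  assume "has_consec_wzs n (SqStar n) ?bad"
  hence "has_consec_wzs n (SqStar n) bad" unfolding bad_def .
  then obtain i j where ij: "i < j" "j \<le> length bad" and wz: "weighted_zero_sum n (SqStar n) (take (j - i) (drop i bad))"
    unfolding has_consec_wzs_def by blast
  define blk where "blk = take (j - i) (drop i bad)"
  have j8: "j \<le> 8" using ij lbad by simp
  have lb: "length blk = j - i" using ij blk_def by simp
  have ex: "\<exists>as. length as = length blk \<and> set as \<subseteq> SqStar n \<and> (\<Sum>l<length blk. as ! l * blk ! l) mod int n = 0"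
    (is "\<exists>as. ?P as")
    using wz unfolding weighted_zero_sum_def blk_def[symmetric] by (rule conjunct2)
  define ws where "ws = (SOME as. ?P as)"
  have "?P ws" unfolding ws_def by (rule someI_ex[OF ex])
  hence as: "length ws = length blk" "set ws \<subseteq> SqStar n" "(\<Sum>l<length blk. ws ! l * blk ! l) mod int n = 0"
    by auto
  define B where "B = {i..<j}"
  define b where "b q = bad ! q" for q
  define w where "w q = ws ! (q - i)" for q
  define f where "f q = w q * b q" for q
  have finB: "finite B" unfolding B_def by simp
  have "(\<Sum>l<length blk. ws ! l * blk ! l) = (\<Sum>l<j-i. f (i + l))"
    using lb ij unfolding f_def w_def b_def blk_def by (intro sum.cong) auto
  also have "\<dots> = (\<Sum>q\<in>B. f q)"
    using sum.atLeastLessThan_shift_0[of f i j] unfolding B_def by (simp add: lessThan_atLeast0 comp_def)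
  finally have nS: "int n dvd (\<Sum>q\<in>B. f q)" using as(3) by (simp add: mod_eq_0_iff_dvd)
  have nmm: "int n = mm * mm" using n mm_def by (simp add: power2_eq_square)
  hence mS: "mm dvd (\<Sum>q\<in>B. f q)" using nS dvd_trans[of mm "int n"] by simp
  have "\<forall>q\<in>B. \<exists>x. mm dvd w q - x^2 \<and> \<not> mm dvd x"
  proof
    fix q assume "q \<in> B"
    hence "q - i < length ws" using as(1) lb B_def by auto
    hence "ws ! (q - i) \<in> set ws" by (rule nth_mem)
    hence "w q \<in> SqStar n" using as(2) unfolding w_def by (rule subsetD[rotated])
    from sqstar_prop[OF n this] show "\<exists>x. mm dvd w q - x^2 \<and> \<not> mm dvd x" unfolding mm_def .
  qed
  from bchoice[OF this] obtain X where X: "\<forall>q\<in>B. mm dvd w q - X q^2 \<and> \<not> mm dvd X q" by blast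
  have bq: "\<And>q. q \<in> B \<Longrightarrow> b q = (if q = 2 then 1 else if q = 5 then c else if q mod 3 = 0 then mm else mm*c)"
    using j8 unfolding B_def b_def mm_def bad_def by (intro bad_nth) auto
  have others: "mm dvd (\<Sum>q\<in>B - {2,5}. f q)"
  proof (intro dvd_sum)
    fix q assume "q \<in> B - {2,5}"
    thus "mm dvd f q" using bq[of q] unfolding f_def by auto
  qed
  have nz: "\<And>q u. q \<in> B \<Longrightarrow> mm dvd w q * u \<Longrightarrow> (\<And>p. prime p \<Longrightarrow> p dvd int m \<Longrightarrow> \<not> p dvd u) \<Longrightarrow> False"
  proof -
    fix q u assume q: "q \<in> B" and d: "mm dvd w q * u" and pu: "\<And>p. prime p \<Longrightarrow> p dvd int m \<Longrightarrow> \<not> p dvd u"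
    have eq: "w q * u - (w q - X q^2) * u = X q^2 * u" by (simp add: algebra_simps)
    have d1: "mm dvd (w q - X q^2) * u" using X q by simp
    have "mm dvd w q * u - (w q - X q^2) * u" using d d1 by (rule dvd_diff)
    hence "mm dvd X q^2 * u" unfolding eq .
    moreover have "\<not> int m dvd X q" using X q unfolding mm_def by blast
    ultimately show False using no_zero[OF sqf m0 _ pu, of "X q"] unfolding mm_def by blast
  qed
  have np: "\<And>q q'. q \<in> B \<Longrightarrow> q' \<in> B \<Longrightarrow> mm dvd w q + w q' * c \<Longrightarrow> False"
  proof -
    fix q q' assume q: "q \<in> B" "q' \<in> B" and d: "mm dvd w q + w q' * c"
    have eq: "(w q + w q' * c) - (w q - X q^2) - (w q' - X q'^2) * c = X q^2 + X q'^2 * c" by (simp add: algebra_simps)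
    have d1: "mm dvd (w q - X q^2)" "mm dvd (w q' - X q'^2) * c" using X q by auto
    have "mm dvd (w q + w q' * c) - (w q - X q^2)" using d d1(1) by (rule dvd_diff)
    hence "mm dvd (w q + w q' * c) - (w q - X q^2) - (w q' - X q'^2) * c"
      using d1(2) by (rule dvd_diff)
    hence "mm dvd X q^2 + X q'^2 * c" unfolding eq .
    moreover have "\<not> int m dvd X q" using X q unfolding mm_def by blast
    ultimately show False using no_pair[OF sqf m0 _ cq, of "X q" "X q'"] unfolding mm_def by blast
  qed
  show False
  proof (cases "2 \<in> B")
    case T2: True
    show False
    proof (cases "5 \<in> B")
      case T5: True
      have sub: "{2,5} \<subseteq> B" using T2 T5 by simp
      have s1: "(\<Sum>q\<in>B. f q) = (\<Sum>q\<in>B - {2,5}. f q) + (\<Sum>q\<in>{2,5}. f q)"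
        by (rule sum.subset_diff[OF sub finB])
      have s2: "(\<Sum>q\<in>{2,5}. f q) = f 2 + f 5" by simp
      have "b 2 = 1" using bq[OF T2] by simp
      moreover have "b 5 = c" using bq[OF T5] by simp
      ultimately have s3: "f 2 + f 5 = w 2 + w 5 * c" unfolding f_def by simp
      have eq: "(\<Sum>q\<in>B. f q) - (\<Sum>q\<in>B - {2,5}. f q) = w 2 + w 5 * c" using s1 s2 s3 by simp
      have "mm dvd (\<Sum>q\<in>B. f q) - (\<Sum>q\<in>B - {2,5}. f q)" using mS others by (rule dvd_diff)
      hence "mm dvd w 2 + w 5 * c" unfolding eq .
      thus False by (rule np[OF T2 T5])
    next
      case F5: False
      have sub: "{2} \<subseteq> B" using T2 by simp
      have s1: "(\<Sum>q\<in>B. f q) = (\<Sum>q\<in>B - {2}. f q) + (\<Sum>q\<in>{2}. f q)"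
        by (rule sum.subset_diff[OF sub finB])
      have es: "B - {2} = B - {2,5}" using F5 by auto
      have "(\<Sum>q\<in>B. f q) = (\<Sum>q\<in>B - {2,5}. f q) + (\<Sum>q\<in>{2}. f q)"
        using s1 unfolding es .
      moreover have "b 2 = 1" using bq[OF T2] by simp
      moreover have "(\<Sum>q\<in>{2}. f q) = w 2 * 1" unfolding f_def using \<open>b 2 = 1\<close> by simp
      ultimately have eq: "(\<Sum>q\<in>B. f q) - (\<Sum>q\<in>B - {2,5}. f q) = w 2 * 1" by simp
      have "mm dvd (\<Sum>q\<in>B. f q) - (\<Sum>q\<in>B - {2,5}. f q)" using mS others by (rule dvd_diff)
      hence "mm dvd w 2 * 1" unfolding eq .
      thus False by (rule nz[OF T2 _ u1])
    qed
  next
    case F2: False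
    show False
    proof (cases "5 \<in> B")
      case T5: True
      have sub: "{5} \<subseteq> B" using T5 by simp
      have s1: "(\<Sum>q\<in>B. f q) = (\<Sum>q\<in>B - {5}. f q) + (\<Sum>q\<in>{5}. f q)"
        by (rule sum.subset_diff[OF sub finB])
      have es: "B - {5} = B - {2,5}" using F2 by auto
      have "(\<Sum>q\<in>B. f q) = (\<Sum>q\<in>B - {2,5}. f q) + (\<Sum>q\<in>{5}. f q)"
        using s1 unfolding es .
      moreover have "b 5 = c" using bq[OF T5] by simp
      moreover have "(\<Sum>q\<in>{5}. f q) = w 5 * c" unfolding f_def using \<open>b 5 = c\<close> by simp
      ultimately have eq: "(\<Sum>q\<in>B. f q) - (\<Sum>q\<in>B - {2,5}. f q) = w 5 * c" by simp
      have "mm dvd (\<Sum>q\<in>B. f q) - (\<Sum>q\<in>B - {2,5}. f q)" using mS others by (rule dvd_diff)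
      hence "mm dvd w 5 * c" unfolding eq .
      thus False by (rule nz[OF T5 _ cu])
    next
      case F5: False
      have "\<not> (i \<le> 2 \<and> 2 < j)" "\<not> (i \<le> 5 \<and> 5 < j)" using F2 F5 B_def by auto
      hence cases: "j = i + 1 \<or> (j = i + 2 \<and> i mod 3 = 0)" using ij j8 by presburger
      thus False
      proof
        assume j1: "j = i + 1"
        hence Bi: "B = {i}" unfolding B_def by auto
        define e where "e = (if i mod 3 = 0 then 1 else c)"
        have "b i = mm * e" using bq[of i] Bi F2 F5 e_def by auto
        hence "mm * mm dvd mm * (w i * e)" using nS Bi nmm unfolding f_def by (simp add: algebra_simps)
        hence "mm dvd w i * e" using mm0 by simp
        moreover have "\<And>p. prime p \<Longrightarrow> p dvd int m \<Longrightarrow> \<not> p dvd e" using cu u1 e_def by auto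
        moreover have "i \<in> B" using Bi by simp
        ultimately show False using nz by blast
      next
        assume j2: "j = i + 2 \<and> i mod 3 = 0"
        hence Bi: "B = {i, i+1}" unfolding B_def by auto
        have ne: "i \<noteq> 2" "i \<noteq> 5" "i+1 \<noteq> 2" "i+1 \<noteq> 5" using Bi F2 F5 by auto
        have i1: "(i+1) mod 3 = 1" using j2 by presburger
        have iB: "i \<in> B" "i+1 \<in> B" using Bi by auto
        have "b i = mm" using bq[OF iB(1)] ne j2 by simp
        moreover have "b (i+1) = mm * c" using bq[OF iB(2)] ne i1 by simp
        ultimately have "b i = mm" "b (i+1) = mm * c" by auto
        hence "(\<Sum>q\<in>B. f q) = mm * (w i + w (i+1) * c)" unfolding Bi f_def by (simp add: algebra_simps)
        hence "mm * mm dvd mm * (w i + w (i+1) * c)" using nS nmm by simp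
        hence "mm dvd w i + w (i+1) * c" using mm0 by simp
        moreover have "i \<in> B" "i + 1 \<in> B" using Bi by simp_all
        ultimately show False using np by blast
      qed
    qed
  qed
qed



lemma prefix_wzs:
  assumes "has_consec_wzs n A (take t L)"
  shows "has_consec_wzs n A L"
proof -
  obtain i j where ij: "i < j" "j \<le> length (take t L)" and w: "weighted_zero_sum n A (take (j - i) (drop i (take t L)))"
    using assms unfolding has_consec_wzs_def by blast
  have "take (j - i) (drop i (take t L)) = take (j - i) (drop i L)"
  proof -
    have "j \<le> t" using ij by simp
    hence "j - i \<le> t - i" by simp
    thus ?thesis by (simp add: drop_take min_def)
  qed
  thus ?thesis unfolding has_consec_wzs_def using ij w by (intro exI[of _ i] exI[of _ j]) auto
qed

theorem mainTheorem20:
  fixes m n :: nat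
  assumes "n = m^2" and "m > 1" and "odd m" and "squarefree m"
  shows "C_const (SqStar n) n = 9"
  unfolding C_const_def
proof (rule Least_equality)
  show "0 < (9::nat) \<and> (\<forall>ys. length ys = 9 \<and> set ys \<subseteq> Zn n \<longrightarrow> has_consec_wzs n (SqStar n) ys)"
  proof
    show "0 < (9::nat)" by simp
    show "\<forall>ys. length ys = 9 \<and> set ys \<subseteq> Zn n \<longrightarrow> has_consec_wzs n (SqStar n) ys"
    proof (intro allI impI)
      fix ys :: "int list" assume "length ys = 9 \<and> set ys \<subseteq> Zn n"
      thus "has_consec_wzs n (SqStar n) ys" using upper[OF assms(1,2,3)] by blast
    qed
  qed
next
  fix y assume Py: "0 < y \<and> (\<forall>ys. length ys = y \<and> set ys \<subseteq> Zn n \<longrightarrow> has_consec_wzs n (SqStar n) ys)"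
  show "9 \<le> y"
  proof (rule ccontr)
    assume "\<not> 9 \<le> y"
    hence y8: "y \<le> 8" by simp
    obtain c where c: "0 < c" "c < int m" "\<forall>p. prime p \<longrightarrow> p dvd int m \<longrightarrow> \<not> p dvd c \<and> \<not> QuadRes p (-c)"
      using exists_c[OF assms(2,3)] by blast
    define bad where "bad = [int m, int m*c, 1, int m, int m*c, c, int m, int m*c]"
    have mm: "int m * int m = int n" using assms(1) by (simp add: power2_eq_square)
    have mc: "int m * c < int n"
    proof -
      have "int m * c < int m * int m" using c assms(2) by simp
      thus ?thesis using mm by simp
    qed
    have m_lt: "int m < int n" using assms(1,2) by (simp add: power2_eq_square)
    have mc0: "0 \<le> int m * c" using c by simp
    have one: "1 < int n" using m_lt assms(2) by simp
    have "c < int n" using c(2) m_lt by simp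
    hence "set bad \<subseteq> Zn n" unfolding bad_def Zn_def using c(1) mc mc0 m_lt one by auto
    hence "set (take y bad) \<subseteq> Zn n" by (rule subset_trans[OF set_take_subset])
    moreover have "length (take y bad) = y" using y8 unfolding bad_def by simp
    ultimately have "length (take y bad) = y \<and> set (take y bad) \<subseteq> Zn n" by (rule conjI[rotated])
    hence "has_consec_wzs n (SqStar n) (take y bad)" using Py[THEN conjunct2, rule_format] by blast
    hence "has_consec_wzs n (SqStar n) bad" by (rule prefix_wzs)
    moreover have "\<not> has_consec_wzs n (SqStar n) bad" unfolding bad_def by (rule lower[OF assms(1,2,4) c(3)])
    ultimately show False by contradiction
  qed
qed

end
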